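(* Let $\gamma>0$ and, for $n\in\mathbb{N}$, let $D_n=\operatorname{diag}(1,2,\dots,n)\in\mathbb{R}^{n\times n}$ and \[ \mathcal{W}_n=\begin{pmatrix} 0 & D_n & 0\\ -D_n & 0 & \gamma D_n\\ 0 & -\gamma D_n & -D_n^2\end{pmatrix}\in\mathbb{R}^{3n\times 3n}, \] regarded as an operator on $\mathbb{C}^{3n}$ with the Euclidean inner product. Then for every $n\in\mathbb{N}$ one has $i\mathbb{R}\subset\rho(\mathcal{W}_n)$ (the resolvent set), and $\sup_{n\in\mathbb{N}}\|\mathcal{W}_n^{-1}\|<\infty$.
   Context: $\mathcal{W}_n$ is the matrix obtained in the paper from a modal approximation of the weakly coupled thermoelastic system under Dirichlet (displacement)–Neumann (temperature) boundary conditions, using the basis $\sqrt{2/\pi}\,\frac1j\sin jx$, $\sqrt{2/\pi}\sin jx$, $\sqrt{2/\pi}\cos jx$, $j=1,\dots,n$. *)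

theory Defs
  imports Complex_Main "Jordan_Normal_Form.Matrix"
begin

definition D_mat :: "nat \<Rightarrow> complex mat" where
  "D_mat n = mat n n (\<lambda>(i,j). if i = j then of_nat (i + 1) else 0)"

definition W_mat :: "real \<Rightarrow> nat \<Rightarrow> complex mat" where
  "W_mat \<gamma> n = mat (3*n) (3*n) (\<lambda>(i,j).
     let bi = i div n; bj = j div n; d = (D_mat n) $$ (i mod n, j mod n);
         d2 = (D_mat n * D_mat n) $$ (i mod n, j mod n) in
     if bi = 0 \<and> bj = 1 then d
     else if bi = 1 \<and> bj = 0 then - d
     else if bi = 1 \<and> bj = 2 then complex_of_real \<gamma> * d
     else if bi = 2 \<and> bj = 1 then - (complex_of_real \<gamma> * d)
     else if bi = 2 \<and> bj = 2 then - d2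
     else 0)"

definition vec_norm :: "complex vec \<Rightarrow> real" where
  "vec_norm v = sqrt (\<Sum>i<dim_vec v. (cmod (v $ i))\<^sup>2)"

definition op_norm :: "complex mat \<Rightarrow> real" where
  "op_norm A = Sup {vec_norm (A *\<^sub>v x) | x. x \<in> carrier_vec (dim_col A) \<and> vec_norm x \<le> 1}"

definition mat_inv :: "complex mat \<Rightarrow> complex mat" where
  "mat_inv A = (SOME B. B \<in> carrier_mat (dim_row A) (dim_row A) \<and>
      A * B = 1\<^sub>m (dim_row A) \<and> B * A = 1\<^sub>m (dim_row A))"

definition resolvent_set :: "complex mat \<Rightarrow> complex set" where
  "resolvent_set A = {z. invertible_mat (z \<cdot>\<^sub>m 1\<^sub>m (dim_row A) - A)}"

end

theory Submission
  imports Defs "Jordan_Normal_Form.Determinant"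
begin

lemma sum3: fixes f :: "nat \<Rightarrow> 'a::comm_monoid_add"
  shows "(\<Sum>i<3*n. f i) = (\<Sum>q<n. f q + f (n+q) + f (2*n+q))"
proof -
  have "(\<Sum>i<3*n. f i) = (\<Sum>i\<in>{0..<n}. f i) + (\<Sum>i\<in>{n..<2*n}. f i) + (\<Sum>i\<in>{2*n..<3*n}. f i)"
    by (simp add: lessThan_atLeast0 sum.atLeastLessThan_concat)
  also have "(\<Sum>i\<in>{n..<2*n}. f i) = (\<Sum>q<n. f (n+q))"
    using sum.shift_bounds_nat_ivl[of f 0 n n] by (simp add: lessThan_atLeast0 add.commute mult_2)
  also have "(\<Sum>i\<in>{2*n..<3*n}. f i) = (\<Sum>q<n. f (2*n+q))"
    using sum.shift_bounds_nat_ivl[of f 0 "2*n" n] by (simp add: lessThan_atLeast0 add.commute)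
  finally show ?thesis by (simp add: sum.distrib lessThan_atLeast0)
qed

lemma D_entry: "a < n \<Longrightarrow> b < n \<Longrightarrow> D_mat n $$ (a,b) = (if a = b then of_nat (a+1) else 0)"
  by (simp add: D_mat_def)

lemma DD_entry: assumes "a < n" "b < n" shows "(D_mat n * D_mat n) $$ (a,b) = (if a = b then (of_nat (a+1))^2 else 0)"
proof -
  have "(D_mat n * D_mat n) $$ (a,b) = (\<Sum>i\<in>{0..<n}. D_mat n $$ (a,i) * D_mat n $$ (i,b))"
    using assms by (simp add: D_mat_def scalar_prod_def)
  also have "\<dots> = (\<Sum>i\<in>{0..<n}. if i = a \<and> a = b then (of_nat (a+1))^2 else 0)"
    using assms by (intro sum.cong) (auto simp: D_entry power2_eq_square)
  also have "\<dots> = (if a = b then (of_nat (a+1))^2 else 0)"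
    using assms by (cases "a = b") (simp_all add: sum.delta)
  finally show ?thesis .
qed


lemma W_row: assumes x: "x \<in> carrier_vec (3*n)" and i: "i < 3*n"
  shows "(W_mat \<gamma> n *\<^sub>v x) $ i = (\<Sum>q<n. W_mat \<gamma> n $$ (i,q) * x$q + W_mat \<gamma> n $$ (i,n+q) * x$(n+q) + W_mat \<gamma> n $$ (i,2*n+q) * x$(2*n+q))"
proof -
  have "(W_mat \<gamma> n *\<^sub>v x) $ i = (\<Sum>j<3*n. W_mat \<gamma> n $$ (i,j) * x$j)"
    using x i by (simp add: W_mat_def scalar_prod_def lessThan_atLeast0)
  then show ?thesis by (simp only: sum3)
qed

lemma divs: assumes "q < (n::nat)" shows "(n+q) div n = 1" "(n+q) mod n = q" "(2*n+q) div n = 2" "(2*n+q) mod n = q"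
  "q div n = 0" "q mod n = q"
  using assms by auto

lemma W_ent: assumes p: "p < n" and q: "q < n"
  shows "W_mat \<gamma> n $$ (p,q) = 0"
   "W_mat \<gamma> n $$ (p,n+q) = (if p = q then of_nat (p+1) else 0)"
   "W_mat \<gamma> n $$ (p,2*n+q) = 0"
   "W_mat \<gamma> n $$ (n+p,q) = (if p = q then - of_nat (p+1) else 0)"
   "W_mat \<gamma> n $$ (n+p,n+q) = 0"
   "W_mat \<gamma> n $$ (n+p,2*n+q) = (if p = q then \<gamma> * of_nat (p+1) else 0)"
   "W_mat \<gamma> n $$ (2*n+p,q) = 0"
   "W_mat \<gamma> n $$ (2*n+p,n+q) = (if p = q then - (\<gamma> * of_nat (p+1)) else 0)"
   "W_mat \<gamma> n $$ (2*n+p,2*n+q) = (if p = q then - ((of_nat (p+1))^2) else 0)"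
proof -
  have e: "\<And>i j. i < 3*n \<Longrightarrow> j < 3*n \<Longrightarrow> W_mat \<gamma> n $$ (i,j) = (let bi = i div n; bj = j div n; d = (D_mat n) $$ (i mod n, j mod n);
         d2 = (D_mat n * D_mat n) $$ (i mod n, j mod n) in
     if bi = 0 \<and> bj = 1 then d
     else if bi = 1 \<and> bj = 0 then - d
     else if bi = 1 \<and> bj = 2 then complex_of_real \<gamma> * d
     else if bi = 2 \<and> bj = 1 then - (complex_of_real \<gamma> * d)
     else if bi = 2 \<and> bj = 2 then - d2
     else 0)" by (simp add: W_mat_def)
  note dp = divs[OF p] and dq = divs[OF q]
  have l: "p < 3*n" "n+p < 3*n" "2*n+p < 3*n" "q < 3*n" "n+q < 3*n" "2*n+q < 3*n" using p q by auto
  show "W_mat \<gamma> n $$ (p,q) = 0" by (subst e[OF l(1) l(4)]) (simp add: dp dq Let_def)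
  show "W_mat \<gamma> n $$ (p,n+q) = (if p = q then of_nat (p+1) else 0)" by (subst e[OF l(1) l(5)]) (simp add: dp dq Let_def D_entry p q)
  show "W_mat \<gamma> n $$ (p,2*n+q) = 0" by (subst e[OF l(1) l(6)]) (simp add: dp dq Let_def)
  show "W_mat \<gamma> n $$ (n+p,q) = (if p = q then - of_nat (p+1) else 0)" by (subst e[OF l(2) l(4)]) (simp add: dp dq Let_def D_entry p q)
  show "W_mat \<gamma> n $$ (n+p,n+q) = 0" by (subst e[OF l(2) l(5)]) (simp add: dp dq Let_def)
  show "W_mat \<gamma> n $$ (n+p,2*n+q) = (if p = q then \<gamma> * of_nat (p+1) else 0)" by (subst e[OF l(2) l(6)]) (simp add: dp dq Let_def D_entry p q)
  show "W_mat \<gamma> n $$ (2*n+p,q) = 0" by (subst e[OF l(3) l(4)]) (simp add: dp dq Let_def)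
  show "W_mat \<gamma> n $$ (2*n+p,n+q) = (if p = q then - (\<gamma> * of_nat (p+1)) else 0)" by (subst e[OF l(3) l(5)]) (simp add: dp dq Let_def D_entry p q)
  show "W_mat \<gamma> n $$ (2*n+p,2*n+q) = (if p = q then - ((of_nat (p+1))^2) else 0)" by (subst e[OF l(3) l(6)]) (simp add: dp dq Let_def DD_entry p q)
qed

lemma W_mulvec: assumes x: "x \<in> carrier_vec (3*n)" and p: "p < n"
  shows "(W_mat \<gamma> n *\<^sub>v x) $ p = of_nat (p+1) * x$(n+p)"
   "(W_mat \<gamma> n *\<^sub>v x) $ (n+p) = - of_nat (p+1) * x$p + complex_of_real \<gamma> * of_nat (p+1) * x$(2*n+p)"
   "(W_mat \<gamma> n *\<^sub>v x) $ (2*n+p) = - complex_of_real \<gamma> * of_nat (p+1) * x$(n+p) - (of_nat (p+1))^2 * x$(2*n+p)"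
proof -
  have l: "p < 3*n" "n+p < 3*n" "2*n+p < 3*n" using p by auto
  have "(W_mat \<gamma> n *\<^sub>v x) $ p = (\<Sum>q<n. if q = p then of_nat (p+1) * x$(n+p) else 0)"
    unfolding W_row[OF x l(1)] by (intro sum.cong) (auto simp: W_ent p)
  then show "(W_mat \<gamma> n *\<^sub>v x) $ p = of_nat (p+1) * x$(n+p)" using p by (simp add: sum.delta)
  have "(W_mat \<gamma> n *\<^sub>v x) $ (n+p) = (\<Sum>q<n. if q = p then - of_nat (p+1) * x$p + complex_of_real \<gamma> * of_nat (p+1) * x$(2*n+p) else 0)"
    unfolding W_row[OF x l(2)] by (intro sum.cong) (auto simp: W_ent p)
  then show "(W_mat \<gamma> n *\<^sub>v x) $ (n+p) = - of_nat (p+1) * x$p + complex_of_real \<gamma> * of_nat (p+1) * x$(2*n+p)" using p by (simp add: sum.delta)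
  have "(W_mat \<gamma> n *\<^sub>v x) $ (2*n+p) = (\<Sum>q<n. if q = p then - complex_of_real \<gamma> * of_nat (p+1) * x$(n+p) - (of_nat (p+1))^2 * x$(2*n+p) else 0)"
    unfolding W_row[OF x l(3)] by (intro sum.cong) (auto simp: W_ent p)
  then show "(W_mat \<gamma> n *\<^sub>v x) $ (2*n+p) = - complex_of_real \<gamma> * of_nat (p+1) * x$(n+p) - (of_nat (p+1))^2 * x$(2*n+p)" using p by (simp add: sum.delta)
qed

lemma block_inj:
  fixes a b c :: complex and k g w :: real
  assumes k: "k > 0" and g: "g > 0"
   and e1: "\<i> * complex_of_real w * a = complex_of_real k * b"
   and e2: "\<i> * complex_of_real w * b = - complex_of_real k * a + complex_of_real g * complex_of_real k * c"
   and e3: "\<i> * complex_of_real w * c = - complex_of_real g * complex_of_real k * b - (complex_of_real k)^2 * c"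
  shows "a = 0 \<and> b = 0 \<and> c = 0"
proof -
  obtain a1 a2 where a: "a = Complex a1 a2" by (cases a)
  obtain b1 b2 where b: "b = Complex b1 b2" by (cases b)
  obtain c1 c2 where c: "c = Complex c1 c2" by (cases c)
  have r1: "k*b1 = - w*a2" "k*b2 = w*a1" using e1 by (simp_all add: a b complex_eq_iff)
  have r2: "-k*a1 + g*k*c1 = - w*b2" "-k*a2 + g*k*c2 = w*b1" using e2 by (simp_all add: a b c complex_eq_iff)
  have r3: "-g*k*b1 - k^2*c1 = - w*c2" "-g*k*b2 - k^2*c2 = w*c1" using e3 by (simp_all add: b c complex_eq_iff power2_eq_square)
  have "- (k^2*(c1^2+c2^2)) = a1*(k*b1 + w*a2) + a2*(k*b2 - w*a1) + b1*(-k*a1+g*k*c1 + w*b2) + b2*(-k*a2+g*k*c2 - w*b1)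
     + c1*(-g*k*b1 - k^2*c1 + w*c2) + c2*(-g*k*b2 - k^2*c2 - w*c1)"
    by (simp add: algebra_simps power2_eq_square)
  also have "\<dots> = 0" using r1 r2 r3 by simp
  finally have "k^2*(c1^2+c2^2) = 0" by simp
  then have "c1^2 + c2^2 = 0" using k by simp
  then have c0: "c1 = 0" "c2 = 0" by (simp_all add: sum_power2_eq_zero_iff)
  then have b0: "b1 = 0" "b2 = 0" using r3 k g by auto
  then have "a1 = 0" "a2 = 0" using r2 k c0 by auto
  then show ?thesis using a b c b0 c0 by (simp add: complex_eq_iff)
qed

lemma sq3: "((x::real)+y+z)^2 \<le> 3*(x^2+y^2+z^2)"
proof -
  have "0 \<le> (x-y)^2+(y-z)^2+(x-z)^2" by simp
  thus ?thesis by (simp add: power2_eq_square algebra_simps)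
qed

lemma block_bound:
  fixes a b c u v w :: complex and k g :: real
  assumes k: "k \<ge> 1" and g: "g > 0"
   and e1: "u = complex_of_real k * b"
   and e2: "v = - complex_of_real k * a + complex_of_real g * complex_of_real k * c"
   and e3: "w = - complex_of_real g * complex_of_real k * b - (complex_of_real k)^2 * c"
  shows "(cmod a)^2 + (cmod b)^2 + (cmod c)^2 \<le> 9*(1+g)^4 * ((cmod u)^2 + (cmod v)^2 + (cmod w)^2)"
proof -
  define M where "M = cmod u + cmod v + cmod w"
  define G where "G = 1 + g"
  have kk: "complex_of_real k \<noteq> 0" using k by auto
  have bb: "b = u / complex_of_real k" using e1 kk by simp
  have "cmod u / k \<le> cmod u" using k
    by (simp add: divide_le_eq mult_le_cancel_left1)
  then have hb: "cmod b \<le> cmod u" unfolding bb norm_divide using k by simp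
  have cc: "c = - (w + complex_of_real g * u) / (complex_of_real k)^2"
  proof -
    have "(complex_of_real k)^2 * c = - (w + complex_of_real g * u)" unfolding e3 e1 by (simp add: algebra_simps power2_eq_square)
    then show ?thesis using kk by (simp add: eq_divide_eq mult.commute)
  qed
  have "cmod c = cmod (w + complex_of_real g * u) / k^2" unfolding cc norm_divide norm_minus_cancel norm_power by simp
  also have "\<dots> \<le> cmod (w + complex_of_real g * u)" using k
  proof -
    have "1 \<le> k^2" using k by (simp add: one_le_power)
    then have "cmod (w + complex_of_real g * u) * 1 \<le> cmod (w + complex_of_real g * u) * k^2"
      by (intro mult_left_mono) auto
    then show ?thesis using k by (simp add: divide_le_eq)
  qed
  also have "\<dots> \<le> cmod w + g * cmod u" using g
    by (metis abs_of_pos norm_mult norm_of_real norm_triangle_ineq)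
  finally have hc: "cmod c \<le> cmod w + g * cmod u" .
  have aa: "a = complex_of_real g * c - v / complex_of_real k"
    using e2 kk by (simp add: field_simps)
  have "cmod a \<le> cmod (complex_of_real g * c) + cmod (v / complex_of_real k)"
    unfolding aa by (rule norm_triangle_ineq4)
  also have "\<dots> \<le> g * cmod c + cmod v" using g k
  proof -
    have "cmod v * 1 \<le> cmod v * k" using k by (intro mult_left_mono) auto
    then have "cmod v / k \<le> cmod v" using k by (simp add: divide_le_eq)
    moreover have "cmod (complex_of_real g * c) = g * cmod c" using g by (simp add: norm_mult)
    ultimately show ?thesis using k by (simp add: norm_divide)
  qed
  finally have ha: "cmod a \<le> g * cmod c + cmod v" .
  have M0: "M \<ge> 0" unfolding M_def by simp
  have G1: "G \<ge> 1" using g unfolding G_def by simp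
  have b1: "cmod b \<le> M" using hb norm_ge_zero[of v] norm_ge_zero[of w] unfolding M_def by linarith
  have c1: "cmod c \<le> G * M"
  proof -
    have "g * cmod u \<le> g * M" using g unfolding M_def by (intro mult_left_mono) auto
    moreover have "G*M = M + g*M" by (simp add: G_def algebra_simps)
    moreover have "cmod w \<le> M" using norm_ge_zero[of u] norm_ge_zero[of v] unfolding M_def by linarith
    ultimately show ?thesis using hc by linarith
  qed
  have a1: "cmod a \<le> G^2 * M"
  proof -
    have "g * cmod c \<le> g * (G*M)" using c1 g by (intro mult_left_mono) auto
    moreover have "cmod v \<le> M" using norm_ge_zero[of u] norm_ge_zero[of w] unfolding M_def by linarith
    ultimately have "cmod a \<le> g * (G*M) + M" using ha by linarith
    also have "\<dots> \<le> G^2 * M" using M0 g unfolding G_def by (simp add: power2_eq_square algebra_simps)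
    finally show ?thesis .
  qed
  have "(cmod a)^2 \<le> (G^2*M)^2" using a1 by (simp add: power_mono)
  moreover have "(cmod b)^2 \<le> M^2" using b1 by (simp add: power_mono)
  moreover have "(cmod c)^2 \<le> (G*M)^2" using c1 by (simp add: power_mono)
  moreover have "M^2 \<le> G^4 * M^2"
    using mult_right_mono[of 1 "G^4" "M^2"] G1 by (simp add: one_le_power)
  moreover have "(G*M)^2 \<le> G^4*M^2"
    using mult_right_mono[of "G^2" "G^4" "M^2"] power_increasing[of 2 4 G] G1 by (simp add: power_mult_distrib)
  moreover have M3: "M^2 \<le> 3 * ((cmod u)^2 + (cmod v)^2 + (cmod w)^2)" unfolding M_def
    by (rule sq3)
  ultimately have "(cmod a)^2 + (cmod b)^2 + (cmod c)^2 \<le> 3 * G^4 * M^2"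
    by (simp add: power_mult_distrib algebra_simps)
  also have "\<dots> \<le> 3 * G^4 * (3 * ((cmod u)^2 + (cmod v)^2 + (cmod w)^2))"
    using M3 by (simp add: mult_left_mono)
  finally show ?thesis unfolding G_def by (simp add: algebra_simps)
qed

lemma smult_one_mult_vec: assumes "v \<in> carrier_vec n"
  shows "((z::complex) \<cdot>\<^sub>m 1\<^sub>m n) *\<^sub>v v = z \<cdot>\<^sub>v v"
proof (rule eq_vecI)
  show "dim_vec ((z \<cdot>\<^sub>m 1\<^sub>m n) *\<^sub>v v) = dim_vec (z \<cdot>\<^sub>v v)" using assms by simp
  fix i assume "i < dim_vec (z \<cdot>\<^sub>v v)"
  then have i: "i < n" using assms by simp
  have "((z \<cdot>\<^sub>m 1\<^sub>m n) *\<^sub>v v) $ i = (\<Sum>j\<in>{0..<n}. z * (if i = j then 1 else 0) * v $ j)"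
    using i assms by (simp add: scalar_prod_def row_def)
  also have "\<dots> = (\<Sum>j\<in>{0..<n}. if i = j then z * v $ j else 0)" by (intro sum.cong) auto
  also have "\<dots> = z * v $ i" using i by simp
  finally show "((z \<cdot>\<^sub>m 1\<^sub>m n) *\<^sub>v v) $ i = (z \<cdot>\<^sub>v v) $ i" using i assms by simp
qed

lemma W_carrier: "W_mat \<gamma> n \<in> carrier_mat (3*n) (3*n)" by (simp add: W_mat_def)

lemma W_kernel: assumes g: "\<gamma> > 0" and v: "v \<in> carrier_vec (3*n)"
  and h: "\<And>i. i < 3*n \<Longrightarrow> (W_mat \<gamma> n *\<^sub>v v) $ i = \<i> * complex_of_real \<omega> * v $ i"
  shows "v = 0\<^sub>v (3*n)"
proof -
  have z: "v$p = 0 \<and> v$(n+p) = 0 \<and> v$(2*n+p) = 0" if p: "p < n" for p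
  proof (rule block_inj[where k = "real (p+1)" and g = \<gamma> and w = \<omega>])
    have l: "p < 3*n" "n+p < 3*n" "2*n+p < 3*n" using p by auto
    note m = W_mulvec[OF v p, of \<gamma>]
    show "real (p+1) > 0" by simp
    show "\<gamma> > 0" by fact
    show "\<i> * complex_of_real \<omega> * v$p = complex_of_real (real (p+1)) * v$(n+p)"
      using h[OF l(1)] m(1) by simp
    show "\<i> * complex_of_real \<omega> * v$(n+p) = - complex_of_real (real (p+1)) * v$p + complex_of_real \<gamma> * complex_of_real (real (p+1)) * v$(2*n+p)"
      using h[OF l(2)] m(2) by simp
    show "\<i> * complex_of_real \<omega> * v$(2*n+p) = - complex_of_real \<gamma> * complex_of_real (real (p+1)) * v$(n+p) - (complex_of_real (real (p+1)))^2 * v$(2*n+p)"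
      using h[OF l(3)] m(3) by simp
  qed
  show ?thesis
  proof (rule eq_vecI)
    show "dim_vec v = dim_vec (0\<^sub>v (3*n))" using v by simp
    fix i assume "i < dim_vec (0\<^sub>v (3*n))"
    then have i: "i < 3*n" by simp
    have "v $ i = 0"
    proof (cases "i < n")
      case True then show ?thesis using z[of i] by simp
    next
      case False
      show ?thesis
      proof (cases "i < 2*n")
        case True
        then have "i = n + (i-n)" "i - n < n" using False by auto
        then show ?thesis using z[of "i-n"] by metis
      next
        case F2: False
        then have "i = 2*n + (i-2*n)" "i - 2*n < n" using i by auto
        then show ?thesis using z[of "i-2*n"] by metis
      qed
    qed
    then show "v $ i = 0\<^sub>v (3*n) $ i" using i by simp
  qed
qed

lemma inv_exists: assumes A: "(A::complex mat) \<in> carrier_mat n n"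
  and k: "\<And>v. v \<in> carrier_vec n \<Longrightarrow> A *\<^sub>v v = 0\<^sub>v n \<Longrightarrow> v = 0\<^sub>v n"
  shows "\<exists>B. B \<in> carrier_mat n n \<and> A * B = 1\<^sub>m n \<and> B * A = 1\<^sub>m n"
proof -
  have "det A \<noteq> 0" using det_0_iff_vec_prod_zero_field[OF A] k by blast
  from det_non_zero_imp_unit[OF A this, unfolded Units_def, of "()"]
  show ?thesis by (auto simp: ring_mat_def)
qed

lemma norm_bound: assumes g: "\<gamma> > 0" and y: "y \<in> carrier_vec (3*n)"
  shows "(\<Sum>i<3*n. (cmod (y$i))^2) \<le> 9*(1+\<gamma>)^4 * (\<Sum>i<3*n. (cmod ((W_mat \<gamma> n *\<^sub>v y)$i))^2)"
proof -
  let ?x = "W_mat \<gamma> n *\<^sub>v y"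
  have "(\<Sum>i<3*n. (cmod (y$i))^2) = (\<Sum>p<n. (cmod (y$p))^2 + (cmod (y$(n+p)))^2 + (cmod (y$(2*n+p)))^2)"
    by (rule sum3)
  also have "\<dots> \<le> (\<Sum>p<n. 9*(1+\<gamma>)^4 * ((cmod (?x$p))^2 + (cmod (?x$(n+p)))^2 + (cmod (?x$(2*n+p)))^2))"
  proof (rule sum_mono)
    fix p assume "p \<in> {..<n}"
    then have p: "p < n" by simp
    note m = W_mulvec[OF y p, of \<gamma>]
    show "(cmod (y$p))^2 + (cmod (y$(n+p)))^2 + (cmod (y$(2*n+p)))^2 \<le> 9*(1+\<gamma>)^4 * ((cmod (?x$p))^2 + (cmod (?x$(n+p)))^2 + (cmod (?x$(2*n+p)))^2)"
    proof (rule block_bound[where k = "real (p+1)"])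
      show "1 \<le> real (p+1)" by simp
      show "\<gamma> > 0" by fact
      show "?x$p = complex_of_real (real (p+1)) * y$(n+p)" using m(1) by simp
      show "?x$(n+p) = - complex_of_real (real (p+1)) * y$p + complex_of_real \<gamma> * complex_of_real (real (p+1)) * y$(2*n+p)"
        using m(2) by simp
      show "?x$(2*n+p) = - complex_of_real \<gamma> * complex_of_real (real (p+1)) * y$(n+p) - (complex_of_real (real (p+1)))^2 * y$(2*n+p)"
        using m(3) by simp
    qed
  qed
  also have "\<dots> = 9*(1+\<gamma>)^4 * (\<Sum>i<3*n. (cmod (?x$i))^2)"
    by (simp add: sum3[of "\<lambda>i. (cmod (?x$i))^2"] sum_distrib_left)
  finally show ?thesis .
qed

theorem lemma4p7:
  fixes \<gamma> :: real
  assumes "\<gamma> > 0"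
  shows "(\<forall>n. {\<i> * complex_of_real \<omega> | \<omega>. True} \<subseteq> resolvent_set (W_mat \<gamma> n))
       \<and> (\<exists>C. \<forall>n. op_norm (mat_inv (W_mat \<gamma> n)) \<le> C)"
proof
  note W = W_carrier[of \<gamma>]
  have dr: "dim_row (W_mat \<gamma> n) = 3*n" for n using W[of n] by simp
  show "\<forall>n. {\<i> * complex_of_real \<omega> | \<omega>. True} \<subseteq> resolvent_set (W_mat \<gamma> n)"
  proof (intro allI subsetI)
    fix n z assume "z \<in> {\<i> * complex_of_real \<omega> | \<omega>. True}"
    then obtain \<omega> where z: "z = \<i> * complex_of_real \<omega>" by blast
    let ?A = "z \<cdot>\<^sub>m 1\<^sub>m (3*n) - W_mat \<gamma> n"
    have A: "?A \<in> carrier_mat (3*n) (3*n)" using W[of n] by (intro minus_carrier_mat) auto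
    have "\<exists>B. B \<in> carrier_mat (3*n) (3*n) \<and> ?A * B = 1\<^sub>m (3*n) \<and> B * ?A = 1\<^sub>m (3*n)"
    proof (rule inv_exists[OF A])
      fix v :: "complex vec" assume v: "v \<in> carrier_vec (3*n)" and Av: "?A *\<^sub>v v = 0\<^sub>v (3*n)"
      have Aeq: "?A *\<^sub>v v = z \<cdot>\<^sub>v v - W_mat \<gamma> n *\<^sub>v v"
        using minus_mult_distrib_mat_vec[of "z \<cdot>\<^sub>m 1\<^sub>m (3*n)" "3*n" "3*n" "W_mat \<gamma> n" v] W[of n] v
        by (simp add: smult_one_mult_vec)
      then have h: "(W_mat \<gamma> n *\<^sub>v v) $ i = \<i> * complex_of_real \<omega> * v $ i" if "i < 3*n" for i
      proof -
        have "(z \<cdot>\<^sub>v v - W_mat \<gamma> n *\<^sub>v v) $ i = 0" using Av that Aeq by simp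
        then have "z * v$i - (W_mat \<gamma> n *\<^sub>v v) $ i = 0" using that v W[of n] by simp
        then show ?thesis using z by simp
      qed
      show "v = 0\<^sub>v (3*n)" by (rule W_kernel[OF assms v h])
    qed
    then show "z \<in> resolvent_set (W_mat \<gamma> n)"
      unfolding resolvent_set_def invertible_mat_def inverts_mat_def using A
      by (auto simp: dr)
  qed
  show "\<exists>C. \<forall>n. op_norm (mat_inv (W_mat \<gamma> n)) \<le> C"
  proof (intro exI allI)
    fix n
    have "\<exists>B. B \<in> carrier_mat (3*n) (3*n) \<and> W_mat \<gamma> n * B = 1\<^sub>m (3*n) \<and> B * W_mat \<gamma> n = 1\<^sub>m (3*n)"
    proof (rule inv_exists[OF W[of n]])
      fix v :: "complex vec" assume v: "v \<in> carrier_vec (3*n)" and Av: "W_mat \<gamma> n *\<^sub>v v = 0\<^sub>v (3*n)"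
      have h: "(W_mat \<gamma> n *\<^sub>v v) $ i = \<i> * complex_of_real 0 * v $ i" if "i < 3*n" for i
        using Av that by simp
      show "v = 0\<^sub>v (3*n)" by (rule W_kernel[OF assms v h])
    qed
    then have "mat_inv (W_mat \<gamma> n) \<in> carrier_mat (3*n) (3*n) \<and> W_mat \<gamma> n * mat_inv (W_mat \<gamma> n) = 1\<^sub>m (3*n)"
      unfolding mat_inv_def dr by (rule someI2_ex) auto
    then have Bc: "mat_inv (W_mat \<gamma> n) \<in> carrier_mat (3*n) (3*n)" and WB: "W_mat \<gamma> n * mat_inv (W_mat \<gamma> n) = 1\<^sub>m (3*n)"
      by auto
    let ?B = "mat_inv (W_mat \<gamma> n)"
    show "op_norm ?B \<le> sqrt (9*(1+\<gamma>)^4)"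
      unfolding op_norm_def
    proof (rule cSup_least)
      show "{vec_norm (?B *\<^sub>v x) |x. x \<in> carrier_vec (dim_col ?B) \<and> vec_norm x \<le> 1} \<noteq> {}"
        by (rule ccontr) (auto simp: vec_norm_def dest: spec[of _ "0\<^sub>v (dim_col ?B)"])
      fix r assume "r \<in> {vec_norm (?B *\<^sub>v x) |x. x \<in> carrier_vec (dim_col ?B) \<and> vec_norm x \<le> 1}"
      then obtain x where r: "r = vec_norm (?B *\<^sub>v x)" and x: "x \<in> carrier_vec (3*n)" and x1: "vec_norm x \<le> 1"
        using Bc by auto
      let ?y = "?B *\<^sub>v x"
      have y: "?y \<in> carrier_vec (3*n)" using Bc x by simp
      have Wy: "W_mat \<gamma> n *\<^sub>v ?y = x"
        using assoc_mult_mat_vec[OF W[of n] Bc x, symmetric] WB x by simp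
      have s1: "(\<Sum>i<3*n. (cmod (x$i))^2) \<le> 1"
      proof -
        have "sqrt (\<Sum>i<3*n. (cmod (x$i))^2) \<le> 1" using x1 x by (simp add: vec_norm_def)
        then show ?thesis by simp
      qed
      have "(\<Sum>i<3*n. (cmod (?y$i))^2) \<le> 9*(1+\<gamma>)^4 * (\<Sum>i<3*n. (cmod (x$i))^2)"
        using norm_bound[OF assms y] Wy by simp
      also have "\<dots> \<le> 9*(1+\<gamma>)^4" using s1 assms by (simp add: mult_left_le)
      finally have "(\<Sum>i<3*n. (cmod (?y$i))^2) \<le> 9*(1+\<gamma>)^4" .
      moreover have "dim_vec ?y = 3*n" using Bc by simp
      ultimately have "(\<Sum>i<dim_vec ?y. (cmod (?y$i))^2) \<le> 9*(1+\<gamma>)^4" by simp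
      then show "r \<le> sqrt (9*(1+\<gamma>)^4)" unfolding r vec_norm_def by (rule real_sqrt_le_mono)
    qed
  qed
qed

end
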